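(* Let $\mathcal{C}$ be a Cayley algebra over a field $\mathbb{F}$ with norm $\mathrm{n}$. Then every $2$-local automorphism of $\mathcal{C}$ is a linear map.
   Context: A Cayley (octonion) algebra over $\mathbb{F}$ is a unital nonassociative algebra $\mathcal{C}$ of dimension $8$ over $\mathbb{F}$ endowed with a quadratic form $\mathrm{n}:\mathcal{C}\to\mathbb{F}$ (the norm) such that $\mathrm{n}(xy)=\mathrm{n}(x)\mathrm{n}(y)$ for all $x,y$ and whose polar form $\mathrm{n}(x,y)=\mathrm{n}(x+y)-\mathrm{n}(x)-\mathrm{n}(y)$ is nondegenerate. A map $\Delta:\mathcal{C}\to\mathcal{C}$ (not assumed linear) is a $2$-local automorphism if for every pair $x,y\in\mathcal{C}$ there is an algebra automorphism $\varphi_{x,y}$ of $\mathcal{C}$ (depending on $x,y$) with $\Delta(x)=\varphi_{x,y}(x)$ and $\Delta(y)=\varphi_{x,y}(y)$. *)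

theory Defs
  imports Complex_Main
begin

definition polar :: "('v::ab_group_add \<Rightarrow> 'f::field) \<Rightarrow> 'v \<Rightarrow> 'v \<Rightarrow> 'f" where
  "polar nrm x y = nrm (x + y) - nrm x - nrm y"

definition cayley_algebra ::
  "('f::field \<Rightarrow> 'v::ab_group_add \<Rightarrow> 'v) \<Rightarrow> ('v \<Rightarrow> 'v \<Rightarrow> 'v) \<Rightarrow> 'v \<Rightarrow> ('v \<Rightarrow> 'f) \<Rightarrow> bool" where
  "cayley_algebra scl mul one nrm \<longleftrightarrow>
     vector_space scl \<and>
     vector_space.dim scl (UNIV :: 'v set) = 8 \<and>
     \<comment> \<open>bilinear multiplication\<close>
     (\<forall>x y z. mul (x + y) z = mul x z + mul y z) \<and>
     (\<forall>x y z. mul x (y + z) = mul x y + mul x z) \<and>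
     (\<forall>a x y. mul (scl a x) y = scl a (mul x y)) \<and>
     (\<forall>a x y. mul x (scl a y) = scl a (mul x y)) \<and>
     \<comment> \<open>unital\<close>
     (\<forall>x. mul one x = x \<and> mul x one = x) \<and>
     \<comment> \<open>nrm is a quadratic form\<close>
     (\<forall>a x. nrm (scl a x) = a * a * nrm x) \<and>
     (\<forall>x y z. polar nrm (x + y) z = polar nrm x z + polar nrm y z) \<and>
     (\<forall>a x y. polar nrm (scl a x) y = a * polar nrm x y) \<and>
     \<comment> \<open>multiplicative\<close>
     (\<forall>x y. nrm (mul x y) = nrm x * nrm y) \<and>
     \<comment> \<open>nondegenerate polar form\<close>
     (\<forall>x. (\<forall>y. polar nrm x y = 0) \<longrightarrow> x = 0)"

definition algebra_automorphism ::
  "('f::field \<Rightarrow> 'v::ab_group_add \<Rightarrow> 'v) \<Rightarrow> ('v \<Rightarrow> 'v \<Rightarrow> 'v) \<Rightarrow> ('v \<Rightarrow> 'v) \<Rightarrow> bool" where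
  "algebra_automorphism scl mul \<phi> \<longleftrightarrow>
     Vector_Spaces.linear scl scl \<phi> \<and> bij \<phi> \<and> (\<forall>x y. \<phi> (mul x y) = mul (\<phi> x) (\<phi> y))"

definition two_local_automorphism ::
  "('f::field \<Rightarrow> 'v::ab_group_add \<Rightarrow> 'v) \<Rightarrow> ('v \<Rightarrow> 'v \<Rightarrow> 'v) \<Rightarrow> ('v \<Rightarrow> 'v) \<Rightarrow> bool" where
  "two_local_automorphism scl mul \<Delta> \<longleftrightarrow>
     (\<forall>x y. \<exists>\<phi>. algebra_automorphism scl mul \<phi> \<and> \<Delta> x = \<phi> x \<and> \<Delta> y = \<phi> y)"

end

theory Submission
  imports Defs
begin

lemma hlp: "(X::'a::ab_group_add) - A + B = 0 \<Longrightarrow> X - C + D = 0 \<Longrightarrow> C - A = D - B"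
proof -
  assume a: "X - A + B = 0" and b: "X - C + D = 0"
  have "X = A - B" using a by (simp add: eq_iff_diff_eq_0[of X] diff_diff_eq2 diff_add_eq)
  moreover have "X = C - D" using b by (simp add: eq_iff_diff_eq_0[of X] diff_diff_eq2 diff_add_eq)
  ultimately show ?thesis by (simp add: algebra_simps)
qed

locale cay = vector_space scl
  for scl :: "'f::field \<Rightarrow> 'v::ab_group_add \<Rightarrow> 'v" +
  fixes mul :: "'v \<Rightarrow> 'v \<Rightarrow> 'v" and one :: 'v and nrm :: "'v \<Rightarrow> 'f"
  assumes C: "cayley_algebra scl mul one nrm"
begin

abbreviation p where "p \<equiv> polar nrm"

lemma ml_add: "mul (x + y) z = mul x z + mul y z" using C by (simp add: cayley_algebra_def)
lemma mr_add: "mul x (y + z) = mul x y + mul x z" using C by (simp add: cayley_algebra_def)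
lemma m_one: "mul one x = x" "mul x one = x" using C by (simp_all add: cayley_algebra_def)
lemma n_sc: "nrm (scl a x) = a * a * nrm x" using C by (simp add: cayley_algebra_def)
lemma p_add: "p (x + y) z = p x z + p y z" using C by (simp add: cayley_algebra_def)
lemma p_sc: "p (scl a x) y = a * p x y" using C by (simp add: cayley_algebra_def)
lemma n_mul: "nrm (mul x y) = nrm x * nrm y" using C by (simp add: cayley_algebra_def)
lemma nondeg: "(\<And>y. p x y = 0) \<Longrightarrow> x = 0" using C by (simp add: cayley_algebra_def)
lemma dim8: "dim (UNIV :: 'v set) = 8" using C by (simp add: cayley_algebra_def)

lemma p_sym: "p x y = p y x" by (simp add: polar_def add.commute)
lemma p_add2: "p z (x + y) = p z x + p z y" by (metis p_add p_sym)
lemma p_sc2: "p y (scl a x) = a * p y x" by (metis p_sc p_sym)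
lemma p_zero: "p 0 z = 0" using p_sc[of 0 0 z] by simp
lemma p_neg: "p (- x) z = - p x z"
proof -
  have "p x z + p (- x) z = 0" using p_add[of x "- x" z] p_zero by simp
  then show ?thesis by (simp add: add_eq_0_iff)
qed
lemma p_diff: "p (x - y) z = p x z - p y z"
  using p_add[of x "- y" z] p_neg[of y z] by simp
lemma n_add: "nrm (x + y) = nrm x + nrm y + p x y" by (simp add: polar_def)

lemma p_sum: "p (\<Sum>b\<in>S. scl (c b) (f b)) z = (\<Sum>b\<in>S. c b * p (f b) z)"
  by (induction S rule: infinite_finite_induct) (simp_all add: p_zero p_add p_sc)

lemma L1: "p (mul x y) (mul x z) = nrm x * p y z"
proof -
  have "nrm (mul x (y + z)) = nrm x * nrm (y + z)" by (rule n_mul)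
  then show ?thesis by (simp add: mr_add n_add n_mul algebra_simps)
qed

lemma L2: "p (mul x y) (mul w z) + p (mul w y) (mul x z) = p x w * p y z"
proof -
  have "p (mul (x + w) y) (mul (x + w) z) = nrm (x + w) * p y z" by (rule L1)
  then show ?thesis by (simp add: ml_add p_add p_add2 n_add L1 algebra_simps p_sym[of w x])
qed

lemma QE: "mul x x - scl (p x one) x + scl (nrm x) one = 0"
proof (rule nondeg)
  fix z
  have a: "p (mul x x) z = p x one * p x z - nrm x * p one z"
    using L2[of x x one z] L1[of x one z] by (simp add: m_one algebra_simps)
  show "p (mul x x - scl (p x one) x + scl (nrm x) one) z = 0"
    by (simp add: p_add p_diff p_sc a)
qed

lemma one_nz: "one \<noteq> 0"
proof
  assume h: "one = 0"
  have m0: "mul 0 x = 0" for x using ml_add[of 0 0 x] by simp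
  have "x = 0" for x :: 'v using m_one(1)[of x] h m0 by simp
  then have U: "(UNIV :: 'v set) = {}  \<union> {0}" by auto
  have "dim (UNIV :: 'v set) = card ({} :: 'v set)"
    by (rule dim_eq_card) (auto simp: U independent_empty)
  then show False using dim8 by simp
qed

lemma aut_props:
  assumes A: "algebra_automorphism scl mul \<phi>"
  shows "p (\<phi> x) (\<phi> y) = p x y"
proof -
  have lin: "Vector_Spaces.linear scl scl \<phi>" and bj: "bij \<phi>"
    and hm: "\<And>x y. \<phi> (mul x y) = mul (\<phi> x) (\<phi> y)"
    using A by (auto simp: algebra_automorphism_def)
  have padd: "\<phi> (x + y) = \<phi> x + \<phi> y" for x y using lin by (simp add: Vector_Spaces.linear_iff)
  have psc: "\<phi> (scl a x) = scl a (\<phi> x)" for a x using lin by (simp add: Vector_Spaces.linear_iff)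
  have pdiff: "\<phi> (x - y) = \<phi> x - \<phi> y" for x y by (metis padd diff_add_cancel add_diff_cancel)
  have p0: "\<phi> 0 = 0" using pdiff[of 0 0] by simp
  have inj: "inj \<phi>" using bj bij_is_inj by auto
  have ph1: "\<phi> one = one"
  proof -
    obtain y where y: "\<phi> y = one" using bj by (metis bij_pointE)
    have "mul (\<phi> one) (\<phi> y) = \<phi> y" using hm[of one y] m_one by simp
    then show ?thesis using y m_one by simp
  qed
  have nn: "nrm (\<phi> x) = nrm x" for x
  proof -
    let ?a = "p x one" and ?b = "nrm x" and ?c = "p (\<phi> x) one" and ?d = "nrm (\<phi> x)"
    have e1: "mul (\<phi> x) (\<phi> x) - scl ?a (\<phi> x) + scl ?b one = 0"
      using arg_cong[OF QE[of x], of \<phi>] by (simp add: pdiff padd psc hm ph1 p0)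
    have e2: "mul (\<phi> x) (\<phi> x) - scl ?c (\<phi> x) + scl ?d one = 0" by (rule QE)
    have e3: "scl (?c - ?a) (\<phi> x) = scl (?d - ?b) one"
    proof -
      have "scl ?c (\<phi> x) - scl ?a (\<phi> x) = scl ?d one - scl ?b one"
        by (rule hlp[OF e1 e2])
      then show ?thesis by (simp add: scale_left_diff_distrib)
    qed
    show ?thesis
    proof (cases "?c = ?a")
      case True
      then have "scl (?d - ?b) one = 0" using e3 by simp
      then show ?thesis using one_nz by simp
    next
      case False
      then have "\<phi> x = scl ((?d - ?b) / (?c - ?a)) one"
        using arg_cong[OF e3, of "scl (inverse (?c - ?a))"]
        by (simp add: divide_inverse mult.commute)
      also have "\<dots> = \<phi> (scl ((?d - ?b) / (?c - ?a)) one)" by (simp add: psc ph1)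
      finally have "x = scl ((?d - ?b) / (?c - ?a)) one" using inj by (simp add: inj_eq)
      then show ?thesis using \<open>\<phi> x = _\<close> by (simp add: n_sc)
    qed
  qed
  show ?thesis by (simp add: polar_def nn padd[symmetric])
qed

end

theorem lemma4p1:
  fixes scl :: "'f::field \<Rightarrow> 'v::ab_group_add \<Rightarrow> 'v"
    and mul :: "'v \<Rightarrow> 'v \<Rightarrow> 'v" and one :: 'v and nrm :: "'v \<Rightarrow> 'f"
    and \<Delta> :: "'v \<Rightarrow> 'v"
  assumes "cayley_algebra scl mul one nrm"
    and "two_local_automorphism scl mul \<Delta>"
  shows "Vector_Spaces.linear scl scl \<Delta>"
proof -
  interpret cay scl mul one nrm
    using assms(1) by (simp add: cay_def cay_axioms_def cayley_algebra_def)
  have pD: "p (\<Delta> x) (\<Delta> y) = p x y" for x y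
  proof -
    obtain \<phi> where "algebra_automorphism scl mul \<phi>" "\<Delta> x = \<phi> x" "\<Delta> y = \<phi> y"
      using assms(2) unfolding two_local_automorphism_def by blast
    then show ?thesis by (simp add: aut_props)
  qed
  have injD: "inj \<Delta>"
  proof (rule injI)
    fix a b assume h: "\<Delta> a = \<Delta> b"
    have "a - b = 0"
    proof (rule nondeg)
      fix z
      show "p (a - b) z = 0" using pD[of a z] pD[of b z] h by (simp add: p_diff)
    qed
    then show "a = b" by simp
  qed
  obtain B where B: "B \<subseteq> UNIV" "independent B" "UNIV \<subseteq> span B" "card B = dim (UNIV :: 'v set)"
    by (rule basis_exists)
  have finB: "finite B" using B(4) dim8 by (metis card.infinite zero_neq_numeral)
  interpret FD: finite_dimensional_vector_space scl B
    by unfold_locales (use finB B in auto)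
  have indD: "independent (\<Delta> ` B)"
    unfolding independent_explicit_module
  proof (intro allI impI)
    fix t u v
    assume t: "finite t" "t \<subseteq> \<Delta> ` B" "(\<Sum>v\<in>t. scl (u v) v) = 0" "v \<in> t"
    define s where "s = B \<inter> \<Delta> -` t"
    have ts: "t = \<Delta> ` s" using t(2) by (auto simp: s_def)
    have fs: "finite s" unfolding s_def using finB by simp
    have sB: "s \<subseteq> B" unfolding s_def by auto
    have sum0: "(\<Sum>b\<in>s. scl (u (\<Delta> b)) (\<Delta> b)) = 0"
      using t(3) unfolding ts using sum.reindex[of \<Delta> s "\<lambda>v. scl (u v) v"] injD
      by (simp add: inj_on_subset)
    have "(\<Sum>b\<in>s. scl (u (\<Delta> b)) b) = 0"
    proof (rule nondeg)
      fix z
      have "p (\<Sum>b\<in>s. scl (u (\<Delta> b)) b) z = (\<Sum>b\<in>s. u (\<Delta> b) * p b z)"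
        by (simp add: p_sum)
      also have "\<dots> = p (\<Sum>b\<in>s. scl (u (\<Delta> b)) (\<Delta> b)) (\<Delta> z)"
        by (simp add: p_sum pD)
      also have "\<dots> = 0" by (simp add: sum0 p_zero)
      finally show "p (\<Sum>b\<in>s. scl (u (\<Delta> b)) b) z = 0" .
    qed
    note ind = B(2)[unfolded independent_explicit_module, rule_format]
    have "u (\<Delta> b) = 0" if "b \<in> s" for b
      using ind[of s "\<lambda>b. u (\<Delta> b)" b, OF fs sB] \<open>(\<Sum>b\<in>s. scl (u (\<Delta> b)) b) = 0\<close> that
      by simp
    then have "\<forall>b\<in>s. u (\<Delta> b) = 0" by blast
    then show "u v = 0" using t(4) ts by auto
  qed
  have spanD: "UNIV \<subseteq> span (\<Delta> ` B)"
    by (rule FD.card_ge_dim_independent) (use indD card_image[OF inj_on_subset[OF injD]] B(4) in auto)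
  have orth: "w = 0" if h: "\<And>z. p w (\<Delta> z) = 0" for w
  proof -
    have "span (\<Delta> ` B) \<subseteq> {v. p w v = 0}"
      by (rule span_minimal) (auto simp: subspace_def p_add2 p_sc2 h p_zero p_sym[of w 0])
    then have "p w v = 0" for v using spanD by auto
    then show ?thesis by (rule nondeg)
  qed
  have vs: "vector_space scl" using assms(1) by (simp add: cayley_algebra_def)
  have add: "\<Delta> (x + y) = \<Delta> x + \<Delta> y" for x y
  proof -
    have "\<Delta> (x + y) - \<Delta> x - \<Delta> y = 0"
      by (rule orth) (simp add: p_diff pD p_add)
    then show ?thesis by (simp add: algebra_simps)
  qed
  have sc: "\<Delta> (scl c x) = scl c (\<Delta> x)" for c x
  proof -
    have "\<Delta> (scl c x) - scl c (\<Delta> x) = 0"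
      by (rule orth) (simp add: p_diff pD p_sc)
    then show ?thesis by simp
  qed
  show ?thesis unfolding Vector_Spaces.linear_iff using vs add sc by blast
qed

end
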